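(* Let $\mathcal{M}=(S,P,E,s_{init},L)$ be a CTMC, $\varepsilon,\delta\geq0$, and $q\geq\max_{s\in S}E(s)$. If $s\sim^{\mathcal{M}}_{\varepsilon,\delta}s'$, then $s\sim_{\tau}s'$ in the uniformization $\mathcal{M}_q$ of $\mathcal{M}$ with respect to $q$, where $\tau=e^{\delta}(1+\varepsilon)-1$.
   Context: A CTMC $(S,P,E,s_{init},L)$: finite $S$, $P\colon S\to\mathrm{Distr}(S)$ ($P(s,A)=\sum_{a\in A}P(s,a)$), $E\colon S\to\mathbb{R}_{>0}$, initial state, labeling $L$. For $R\subseteq S\times S$, $R(A)=\{t\mid\exists a\in A:(a,t)\in R\}$. A reflexive symmetric $R$ is an $(\varepsilon,\delta)$-bisimulation on $\mathcal{M}$ if for all $(s,s')\in R$: $L(s)=L(s')$, $|\ln E(s)-\ln E(s')|\leq\delta$, and $P(s,A)\leq P(s',R(A))+\varepsilon$ for all $A\subseteq S$; $s\sim^{\mathcal{M}}_{\varepsilon,\delta}s'$ if some such relation contains $(s,s')$. The uniformization $\mathcal{M}_q$ is the DTMC $(S,\overline{P},s_{init},L)$ with $\overline{P}(s,s')=P(s,s')E(s)/q$ for $s\neq s'$ and $\overline{P}(s,s)=1+P(s,s)E(s)/q-E(s)/q$. For a DTMC $(S,\overline{P},s_{init},L)$ and $\tau\geq0$, a reflexive symmetric $R\subseteq S\times S$ is a $\tau$-bisimulation if for all $(s,t)\in R$: $L(s)=L(t)$ and $\overline{P}(s,A)\leq\overline{P}(t,R(A))+\tau$ for all $A\subseteq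 S$; $s\sim_\tau t$ if some $\tau$-bisimulation contains $(s,t)$. *)

theory Defs
  imports "HOL-Analysis.Analysis"
begin

definition is_ctmc :: "'a set \<Rightarrow> ('a \<Rightarrow> 'a \<Rightarrow> real) \<Rightarrow> ('a \<Rightarrow> real) \<Rightarrow> 'a \<Rightarrow> ('a \<Rightarrow> 'l) \<Rightarrow> bool" where
  "is_ctmc S P E s0 L \<longleftrightarrow> finite S \<and> s0 \<in> S \<and>
     (\<forall>s\<in>S. (\<forall>t\<in>S. 0 \<le> P s t) \<and> (\<forall>t. t \<notin> S \<longrightarrow> P s t = 0) \<and> sum (P s) S = 1 \<and> 0 < E s)"

definition is_dtmc :: "'a set \<Rightarrow> ('a \<Rightarrow> 'a \<Rightarrow> real) \<Rightarrow> 'a \<Rightarrow> ('a \<Rightarrow> 'l) \<Rightarrow> bool" where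
  "is_dtmc S P s0 L \<longleftrightarrow> finite S \<and> s0 \<in> S \<and>
     (\<forall>s\<in>S. (\<forall>t\<in>S. 0 \<le> P s t) \<and> (\<forall>t. t \<notin> S \<longrightarrow> P s t = 0) \<and> sum (P s) S = 1)"

definition Pset :: "('a \<Rightarrow> 'a \<Rightarrow> real) \<Rightarrow> 'a \<Rightarrow> 'a set \<Rightarrow> real" where
  "Pset P s A = sum (P s) A"

definition rel_img :: "('a \<times> 'a) set \<Rightarrow> 'a set \<Rightarrow> 'a set" where
  "rel_img R A = {t. \<exists>a\<in>A. (a, t) \<in> R}"

definition is_eps_delta_bisim ::
  "'a set \<Rightarrow> ('a \<Rightarrow> 'a \<Rightarrow> real) \<Rightarrow> ('a \<Rightarrow> real) \<Rightarrow> ('a \<Rightarrow> 'l) \<Rightarrow> real \<Rightarrow> real \<Rightarrow> ('a \<times> 'a) set \<Rightarrow> bool" where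
  "is_eps_delta_bisim S P E L \<epsilon> \<delta> R \<longleftrightarrow> R \<subseteq> S \<times> S \<and> refl_on S R \<and> sym R \<and>
     (\<forall>(s, s')\<in>R. L s = L s' \<and> \<bar>ln (E s) - ln (E s')\<bar> \<le> \<delta> \<and>
        (\<forall>A. A \<subseteq> S \<longrightarrow> Pset P s A \<le> Pset P s' (rel_img R A) + \<epsilon>))"

definition ctmc_bisimilar ::
  "'a set \<Rightarrow> ('a \<Rightarrow> 'a \<Rightarrow> real) \<Rightarrow> ('a \<Rightarrow> real) \<Rightarrow> ('a \<Rightarrow> 'l) \<Rightarrow> real \<Rightarrow> real \<Rightarrow> 'a \<Rightarrow> 'a \<Rightarrow> bool" where
  "ctmc_bisimilar S P E L \<epsilon> \<delta> s s' \<longleftrightarrow> (\<exists>R. is_eps_delta_bisim S P E L \<epsilon> \<delta> R \<and> (s, s') \<in> R)"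

definition unif :: "('a \<Rightarrow> 'a \<Rightarrow> real) \<Rightarrow> ('a \<Rightarrow> real) \<Rightarrow> real \<Rightarrow> 'a \<Rightarrow> 'a \<Rightarrow> real" where
  "unif P E q s t = (if s \<noteq> t then P s t * E s / q else 1 + P s s * E s / q - E s / q)"

definition is_tau_bisim ::
  "'a set \<Rightarrow> ('a \<Rightarrow> 'a \<Rightarrow> real) \<Rightarrow> ('a \<Rightarrow> 'l) \<Rightarrow> real \<Rightarrow> ('a \<times> 'a) set \<Rightarrow> bool" where
  "is_tau_bisim S P L \<tau> R \<longleftrightarrow> R \<subseteq> S \<times> S \<and> refl_on S R \<and> sym R \<and>
     (\<forall>(s, t)\<in>R. L s = L t \<and> (\<forall>A. A \<subseteq> S \<longrightarrow> Pset P s A \<le> Pset P t (rel_img R A) + \<tau>))"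

definition dtmc_bisimilar ::
  "'a set \<Rightarrow> ('a \<Rightarrow> 'a \<Rightarrow> real) \<Rightarrow> ('a \<Rightarrow> 'l) \<Rightarrow> real \<Rightarrow> 'a \<Rightarrow> 'a \<Rightarrow> bool" where
  "dtmc_bisimilar S P L \<tau> s t \<longleftrightarrow> (\<exists>R. is_tau_bisim S P L \<tau> R \<and> (s, t) \<in> R)"

end

theory Submission
  imports Defs
begin

lemma unif_sum:
  assumes "finite A"
  shows "sum (unif P E q s) A = E s / q * sum (P s) A + (if s \<in> A then 1 - E s / q else 0)"
proof -
  have "\<And>a. unif P E q s a = E s / q * P s a + (if s = a then 1 - E s / q else 0)"
    by (simp add: unif_def)
  then have "sum (unif P E q s) A = (\<Sum>a\<in>A. E s / q * P s a + (if s = a then 1 - E s / q else 0))"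
    by simp
  also have "\<dots> = E s / q * sum (P s) A + (\<Sum>a\<in>A. (if s = a then 1 - E s / q else 0))"
    by (simp add: sum.distrib sum_distrib_left)
  also have "\<dots> = E s / q * sum (P s) A + (if s \<in> A then 1 - E s / q else 0)"
    using assms by simp
  finally show ?thesis .
qed

lemma case_in:
  fixes a b p r e d :: real
  assumes "0 \<le> p" "p \<le> 1" "0 \<le> r" "r \<le> 1" "p \<le> r + e" "0 < a" "a \<le> 1" "0 < b" "b \<le> 1"
    "b \<le> exp d * a" "0 \<le> e" "0 \<le> d"
  shows "a * p + (1 - a) \<le> b * r + (1 - b) + (exp d * (1 + e) - 1)"
proof (cases "b \<le> a")
  case True
  have "b * (1 - r) - a * (1 - p) \<le> b * (1 - p + e) - a * (1 - p)"
    using assms by (intro diff_right_mono mult_left_mono) auto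
  also have "\<dots> = (b - a) * (1 - p) + b * e" by algebra
  also have "\<dots> \<le> 0 * (1 - p) + 1 * e"
    using True assms by (intro add_mono mult_right_mono mult_mono) auto
  also have "\<dots> \<le> exp d * (1 + e) - 1"
  proof -
    have "1 \<le> exp d" using assms by simp
    then have "1 * (1 + e) \<le> exp d * (1 + e)" using assms by (intro mult_right_mono) auto
    then show ?thesis by simp
  qed
  finally show ?thesis by (simp add: algebra_simps)
next
  case False
  have "b * (1 - r) - a * (1 - p) \<le> (b - a) * (1 - p) + b * e"
  proof -
    have "b * (1 - r) \<le> b * (1 - p + e)" using assms by (intro mult_left_mono) auto
    then show ?thesis by (simp add: algebra_simps)
  qed
  also have "\<dots> \<le> (b - a) * 1 + 1 * e"
    using False assms by (intro add_mono mult_left_mono mult_mono) auto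
  also have "\<dots> \<le> exp d * (1 + e) - 1"
  proof -
    have "b - a \<le> exp d * a - a" using assms by simp
    also have "\<dots> = (exp d - 1) * a" by algebra
    also have "\<dots> \<le> (exp d - 1) * 1" using assms by (intro mult_left_mono) auto
    finally have "b - a \<le> exp d - 1" by simp
    moreover have "e \<le> exp d * e" using assms by (simp add: mult_le_cancel_right1)
    ultimately show ?thesis by (simp add: algebra_simps)
  qed
  finally show ?thesis by (simp add: algebra_simps)
qed

lemma case_out:
  fixes a b p r e d c :: real
  assumes "0 \<le> p" "p \<le> 1" "0 \<le> r" "r \<le> 1" "p \<le> r + e" "0 < a" "a \<le> 1" "0 < b" "b \<le> 1"
    "a \<le> exp d * b" "0 \<le> e" "0 \<le> d" "0 \<le> c"
  shows "a * p \<le> b * r + c + (exp d * (1 + e) - 1)"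
proof -
  have "a * p \<le> a * (r + e)" using assms by (intro mult_left_mono) auto
  also have "\<dots> = a * r + a * e" by algebra
  also have "\<dots> \<le> exp d * b * r + 1 * e"
    using assms by (intro add_mono mult_right_mono mult_mono) auto
  also have "\<dots> = b * r + (exp d - 1) * (b * r) + e" by algebra
  also have "\<dots> \<le> b * r + (exp d - 1) * 1 + e"
  proof -
    have "b * r \<le> 1 * 1" using assms by (intro mult_mono) auto
    then have "(exp d - 1) * (b * r) \<le> (exp d - 1) * 1" using assms by (intro mult_left_mono) auto
    then show ?thesis by simp
  qed
  also have "\<dots> \<le> b * r + c + (exp d * (1 + e) - 1)"
  proof -
    have "e \<le> exp d * e" using assms by (simp add: mult_le_cancel_right1)
    then show ?thesis using assms by (simp add: algebra_simps)
  qed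
  finally show ?thesis .
qed

theorem lemma2:
  fixes S :: "'a set" and P :: "'a \<Rightarrow> 'a \<Rightarrow> real" and E :: "'a \<Rightarrow> real"
    and s0 :: 'a and L :: "'a \<Rightarrow> 'l" and \<epsilon> \<delta> q :: real and s s' :: 'a
  assumes "is_ctmc S P E s0 L"
    and "0 \<le> \<epsilon>" and "0 \<le> \<delta>"
    and "\<forall>x\<in>S. E x \<le> q"
    and "ctmc_bisimilar S P E L \<epsilon> \<delta> s s'"
  shows "dtmc_bisimilar S (unif P E q) L (exp \<delta> * (1 + \<epsilon>) - 1) s s'"
proof -
  obtain R where R: "is_eps_delta_bisim S P E L \<epsilon> \<delta> R" "(s, s') \<in> R"
    using assms(5) unfolding ctmc_bisimilar_def by blast
  have RS: "R \<subseteq> S \<times> S" and rf: "refl_on S R" and sy: "sym R"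
    using R(1) unfolding is_eps_delta_bisim_def by auto
  have fin: "finite S" using assms(1) unfolding is_ctmc_def by auto
  have ctmc: "\<And>x. x \<in> S \<Longrightarrow> (\<forall>t\<in>S. 0 \<le> P x t) \<and> sum (P x) S = 1 \<and> 0 < E x"
    using assms(1) unfolding is_ctmc_def by auto
  have Pb: "0 \<le> sum (P x) B \<and> sum (P x) B \<le> 1" if "x \<in> S" "B \<subseteq> S" for x B
  proof -
    have nn: "\<forall>t\<in>S. 0 \<le> P x t" using ctmc[OF that(1)] by auto
    have "0 \<le> sum (P x) B" using nn that by (intro sum_nonneg) auto
    moreover have "sum (P x) B \<le> sum (P x) S"
      using nn that fin by (intro sum_mono2) auto
    ultimately show ?thesis using ctmc[OF that(1)] by simp
  qed
  have main: "Pset (unif P E q) x A \<le> Pset (unif P E q) t (rel_img R A) + (exp \<delta> * (1 + \<epsilon>) - 1)"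
    if xt: "(x, t) \<in> R" and A: "A \<subseteq> S" for x t A
  proof -
    have xS: "x \<in> S" and tS: "t \<in> S" using xt RS by auto
    have cond: "\<bar>ln (E x) - ln (E t)\<bar> \<le> \<delta>" and
      pc: "Pset P x A \<le> Pset P t (rel_img R A) + \<epsilon>"
      using R(1) xt A unfolding is_eps_delta_bisim_def by auto
    have RA: "rel_img R A \<subseteq> S" using RS unfolding rel_img_def by auto
    have finA: "finite A" using A fin finite_subset by auto
    have finRA: "finite (rel_img R A)" using RA fin finite_subset by auto
    have Ex: "0 < E x" and Et: "0 < E t" using ctmc xS tS by auto
    have qx: "E x \<le> q" and qt: "E t \<le> q" using assms(4) xS tS by auto
    have qpos: "0 < q" using Ex qx by simp
    have r1: "E x \<le> exp \<delta> * E t"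
    proof -
      have "ln (E x) \<le> \<delta> + ln (E t)" using cond by simp
      then have "exp (ln (E x)) \<le> exp (\<delta> + ln (E t))" by simp
      then show ?thesis using Ex Et by (simp add: exp_add)
    qed
    have r2: "E t \<le> exp \<delta> * E x"
    proof -
      have "ln (E t) \<le> \<delta> + ln (E x)" using cond by simp
      then have "exp (ln (E t)) \<le> exp (\<delta> + ln (E x))" by simp
      then show ?thesis using Ex Et by (simp add: exp_add)
    qed
    have a1: "E x / q \<le> exp \<delta> * (E t / q)" using r1 qpos by (simp add: divide_right_mono)
    have a2: "E t / q \<le> exp \<delta> * (E x / q)" using r2 qpos by (simp add: divide_right_mono)
    have ax: "0 < E x / q" "E x / q \<le> 1" using Ex qx qpos by auto
    have at: "0 < E t / q" "E t / q \<le> 1" using Et qt qpos by auto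
    have p: "0 \<le> sum (P x) A" "sum (P x) A \<le> 1" using Pb[OF xS A] by auto
    have r: "0 \<le> sum (P t) (rel_img R A)" "sum (P t) (rel_img R A) \<le> 1" using Pb[OF tS RA] by auto
    have pc': "sum (P x) A \<le> sum (P t) (rel_img R A) + \<epsilon>" using pc unfolding Pset_def .
    show ?thesis
    proof (cases "x \<in> A")
      case True
      then have "t \<in> rel_img R A" using xt unfolding rel_img_def by auto
      then show ?thesis
        unfolding Pset_def unif_sum[OF finA] unif_sum[OF finRA]
        using True case_in[OF p r pc' ax at a2 assms(2,3)] by simp
    next
      case False
      have c: "0 \<le> (if t \<in> rel_img R A then 1 - E t / q else 0)" using at by auto
      show ?thesis
        unfolding Pset_def unif_sum[OF finA] unif_sum[OF finRA]
        using False case_out[OF p r pc' ax at a1 assms(2,3) c] by simp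
    qed
  qed
  have "is_tau_bisim S (unif P E q) L (exp \<delta> * (1 + \<epsilon>) - 1) R"
    unfolding is_tau_bisim_def using RS rf sy main R(1) unfolding is_eps_delta_bisim_def
    by auto
  then show ?thesis unfolding dtmc_bisimilar_def using R(2) by blast
qed

end
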